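(* Let $G$ be a graph of order $n$ such that both $G$ and its complement $\bar G$ are connected. Then $b(G)\, b(\bar G)\leq n+4$, and equality holds if and only if $G$ is (isomorphic to) the cycle $C_5$.
   Context: Burning process on a finite graph $G$: initially all vertices are unburned. In each round, every already burned vertex spreads fire to all of its neighbors, which become burned, and at the same time one chooses an unburned vertex (if any remains) and changes its status to burned; burned vertices remain burned. The burning number $b(G)$ is the minimum number of rounds needed to burn all vertices of $G$. $\bar G$ is the complement graph of $G$. *)

theory Defs
  imports Main
begin

definition simple_graph :: "'a set \<Rightarrow> ('a \<Rightarrow> 'a \<Rightarrow> bool) \<Rightarrow> bool" where
  "simple_graph V E \<longleftrightarrow> finite V \<and> (\<forall>u v. E u v \<longrightarrow> u \<in> V \<and> v \<in> V)
     \<and> (\<forall>u v. E u v \<longrightarrow> E v u) \<and> (\<forall>u. \<not> E u u)"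

definition complement :: "'a set \<Rightarrow> ('a \<Rightarrow> 'a \<Rightarrow> bool) \<Rightarrow> 'a \<Rightarrow> 'a \<Rightarrow> bool" where
  "complement V E = (\<lambda>u v. u \<in> V \<and> v \<in> V \<and> u \<noteq> v \<and> \<not> E u v)"

definition connected_graph :: "'a set \<Rightarrow> ('a \<Rightarrow> 'a \<Rightarrow> bool) \<Rightarrow> bool" where
  "connected_graph V E \<longleftrightarrow>
     (\<forall>u\<in>V. \<forall>v\<in>V. (\<lambda>x y. x \<in> V \<and> y \<in> V \<and> E x y)\<^sup>*\<^sup>* u v)"

text \<open>Burned set before round t+1 (i.e. after t rounds) when the sources chosen in
  rounds 1,2,... are xs!0, xs!1, ...: each round the fire spreads to all neighbours of
  burned vertices and the chosen source becomes burned.\<close>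
fun burned :: "'a set \<Rightarrow> ('a \<Rightarrow> 'a \<Rightarrow> bool) \<Rightarrow> 'a list \<Rightarrow> nat \<Rightarrow> 'a set" where
  "burned V E xs 0 = {}"
| "burned V E xs (Suc t) = burned V E xs t \<union> {v \<in> V. \<exists>u \<in> burned V E xs t. E u v}
     \<union> (if t < length xs then {xs ! t} else {})"

definition burning_seq :: "'a set \<Rightarrow> ('a \<Rightarrow> 'a \<Rightarrow> bool) \<Rightarrow> 'a list \<Rightarrow> bool" where
  "burning_seq V E xs \<longleftrightarrow> set xs \<subseteq> V
     \<and> (\<forall>t < length xs. xs ! t \<notin> burned V E xs t)
     \<and> V \<subseteq> burned V E xs (length xs)"

definition burning_number :: "'a set \<Rightarrow> ('a \<Rightarrow> 'a \<Rightarrow> bool) \<Rightarrow> nat" where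
  "burning_number V E = (LEAST k. \<exists>xs. burning_seq V E xs \<and> length xs = k)"

definition iso_C5 :: "'a set \<Rightarrow> ('a \<Rightarrow> 'a \<Rightarrow> bool) \<Rightarrow> bool" where
  "iso_C5 V E \<longleftrightarrow> (\<exists>f. bij_betw f V {0..<(5::nat)} \<and>
     (\<forall>u\<in>V. \<forall>v\<in>V. E u v \<longleftrightarrow> ((f u + 1) mod 5 = f v \<or> (f v + 1) mod 5 = f u)))"

end

theory Submission
  imports Defs
begin


fun nb :: "('a \<Rightarrow> 'a \<Rightarrow> bool) \<Rightarrow> 'a \<Rightarrow> nat \<Rightarrow> 'a set" where
  "nb E x 0 = {x}"
| "nb E x (Suc r) = nb E x r \<union> {v. \<exists>u\<in>nb E x r. E u v}"

lemma nb_mono: "r \<le> s \<Longrightarrow> nb E x r \<subseteq> nb E x s"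
  by (induction s) (auto simp: le_Suc_eq)

lemma nb_center: "x \<in> nb E x r"
  by (induction r) auto

lemma nb_in_V: "simple_graph V E \<Longrightarrow> x \<in> V \<Longrightarrow> nb E x r \<subseteq> V"
  by (induction r) (auto simp: simple_graph_def)

lemma nb_one: "nb E x 1 = insert x {v. E x v}"
  by (auto simp: One_nat_def)

lemma nb_two: "nb E x 2 = insert x {v. E x v} \<union> {v. \<exists>u. (u = x \<or> E x u) \<and> E u v}"
  by (auto simp: numeral_2_eq_2)

lemma nb_step: "x \<in> nb E y 1 \<Longrightarrow> nb E x j \<subseteq> nb E y (Suc j)"
proof (induction j)
  case 0 thus ?case by (auto simp: One_nat_def)
next
  case (Suc j)
  thus ?case by auto
qed

lemma burned_nb:
  assumes "\<And>u v. E u v \<Longrightarrow> v \<in> V"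
  shows "i < t \<Longrightarrow> i < length xs \<Longrightarrow> nb E (xs!i) (t - Suc i) \<subseteq> burned V E xs t"
proof (induction t)
  case 0 thus ?case by simp
next
  case (Suc t)
  show ?case
  proof (cases "i = t")
    case True thus ?thesis using Suc.prems by auto
  next
    case False
    hence "i < t" using Suc.prems by simp
    hence eq: "Suc t - Suc i = Suc (t - Suc i)" by simp
    have "nb E (xs!i) (t - Suc i) \<subseteq> burned V E xs t" using Suc.IH \<open>i<t\<close> Suc.prems by simp
    thus ?thesis unfolding eq using assms by auto
  qed
qed

lemma burned_cong:
  "(\<And>i. i < t \<Longrightarrow> (i < length xs \<longleftrightarrow> i < length ys)) \<Longrightarrow>
   (\<And>i. i < t \<Longrightarrow> i < length xs \<Longrightarrow> xs!i = ys!i) \<Longrightarrow> burned V E xs t = burned V E ys t"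
proof (induction t)
  case 0 thus ?case by simp
next
  case (Suc t)
  have "burned V E xs t = burned V E ys t" using Suc.prems by (intro Suc.IH) auto
  thus ?case using Suc.prems[of t] by auto
qed

lemma burned_upd_mono:
  assumes "t < length ys" "ys!t \<in> burned V E ys t"
  shows "burned V E ys s \<subseteq> burned V E (ys[t := w]) s"
proof (induction s)
  case 0 show ?case by simp
next
  case (Suc s)
  have src: "(if s < length ys then {ys!s} else {}) \<subseteq> burned V E (ys[t:=w]) (Suc s)"
  proof (cases "s = t")
    case True
    have "ys!t \<in> burned V E (ys[t:=w]) t" using assms(2) Suc.IH True by auto
    thus ?thesis using True by auto
  next
    case False thus ?thesis by auto
  qed
  have "burned V E ys s \<union> {v\<in>V. \<exists>u\<in>burned V E ys s. E u v} \<subseteq> burned V E (ys[t:=w]) (Suc s)"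
    using Suc.IH by auto
  with src show ?case by simp
qed

lemma valid_aux:
  "length ys - t = d \<Longrightarrow> t \<le> length ys \<Longrightarrow> set ys \<subseteq> V \<Longrightarrow> V \<subseteq> burned V E ys (length ys) \<Longrightarrow>
   (\<forall>i<t. ys!i \<notin> burned V E ys i) \<Longrightarrow> \<exists>xs. burning_seq V E xs \<and> length xs \<le> length ys"
proof (induction d arbitrary: ys t)
  case 0
  hence "t = length ys" by simp
  thus ?case using 0 unfolding burning_seq_def by auto
next
  case (Suc d)
  hence tl: "t < length ys" by simp
  show ?case
  proof (cases "ys!t \<in> burned V E ys t")
    case False
    have "\<forall>i<Suc t. ys!i \<notin> burned V E ys i" using Suc.prems(5) False less_Suc_eq by auto
    thus ?thesis using Suc.IH[of ys "Suc t"] Suc.prems tl by auto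
  next
    case True
    show ?thesis
    proof (cases "V \<subseteq> burned V E ys t")
      case True
      have eqs: "\<And>i. i \<le> t \<Longrightarrow> burned V E (take t ys) i = burned V E ys i"
        by (rule burned_cong) (use tl in auto)
      have "burning_seq V E (take t ys)" unfolding burning_seq_def
        using Suc.prems(3,5) True eqs tl by (auto dest: in_set_takeD)
      thus ?thesis by (intro exI[of _ "take t ys"]) auto
    next
      case False
      then obtain w where w: "w \<in> V" "w \<notin> burned V E ys t" by auto
      define ys' where "ys' = ys[t := w]"
      have len: "length ys' = length ys" by (simp add: ys'_def)
      have eqs: "\<And>i. i \<le> t \<Longrightarrow> burned V E ys' i = burned V E ys i"
        by (rule burned_cong) (auto simp: ys'_def)
      have set': "set ys' \<subseteq> V" using Suc.prems(3) w(1) set_update_subset_insert[of ys t w]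
        by (auto simp: ys'_def)
      have cov: "V \<subseteq> burned V E ys' (length ys')"
        using Suc.prems(4) burned_upd_mono[OF tl \<open>ys!t \<in> burned V E ys t\<close>, where s="length ys" and w=w]
        by (auto simp: ys'_def)
      have vi: "\<forall>i<Suc t. ys'!i \<notin> burned V E ys' i"
      proof (intro allI impI)
        fix i assume "i < Suc t"
        show "ys'!i \<notin> burned V E ys' i"
        proof (cases "i = t")
          case True thus ?thesis using w eqs[of t] tl by (simp add: ys'_def)
        next
          case False thus ?thesis using \<open>i < Suc t\<close> eqs[of i] Suc.prems(5) by (auto simp: ys'_def)
        qed
      qed
      have "\<exists>xs. burning_seq V E xs \<and> length xs \<le> length ys'"
        using Suc.IH[of ys' "Suc t"] Suc.prems(1) len tl set' cov vi by auto
      thus ?thesis using len by simp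
    qed
  qed
qed

lemma bn_le: "burning_seq V E xs \<Longrightarrow> length xs \<le> k \<Longrightarrow> burning_number V E \<le> k"
  unfolding burning_number_def by (rule le_trans[OF Least_le]) auto

lemma bn_attained: "burning_seq V E xs \<Longrightarrow> \<exists>ys. burning_seq V E ys \<and> length ys = burning_number V E"
  unfolding burning_number_def by (rule LeastI_ex) auto

lemma cover_bn:
  assumes "simple_graph V E" "length ys = k" "set ys \<subseteq> V"
    "\<forall>v\<in>V. \<exists>i<k. v \<in> nb E (ys!i) (k - Suc i)"
  shows "\<exists>xs. burning_seq V E xs \<and> length xs \<le> k"
proof -
  have "V \<subseteq> burned V E ys k"
  proof
    fix v assume "v \<in> V"
    then obtain i where "i < k" "v \<in> nb E (ys!i) (k - Suc i)" using assms(4) by auto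
    thus "v \<in> burned V E ys k" using burned_nb[of E V i k ys] assms(1,2)
      by (auto simp: simple_graph_def)
  qed
  thus ?thesis using valid_aux[of ys 0] assms by auto
qed



lemma arith_helper: "2 * r \<le> (X::nat) + 2 * Suc m + 2 \<Longrightarrow> Suc m \<le> s \<Longrightarrow> s \<le> r \<Longrightarrow> r' = r - s \<Longrightarrow> 2 * r' \<le> X + 2"
  by arith

locale rtree =
  fixes V :: "'a set" and E :: "'a \<Rightarrow> 'a \<Rightarrow> bool" and \<rho> :: 'a and h :: "'a \<Rightarrow> nat" and p :: "'a \<Rightarrow> 'a"
  assumes sg: "simple_graph V E"
    and rV: "\<rho> \<in> V" and pr: "p \<rho> = \<rho>" and hr: "h \<rho> = 0"
    and pV: "\<And>v. v \<in> V \<Longrightarrow> p v \<in> V"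
    and pE: "\<And>v. v \<in> V \<Longrightarrow> v \<noteq> \<rho> \<Longrightarrow> E (p v) v \<and> h v = Suc (h (p v))"
begin

lemma symE: "E u v \<Longrightarrow> E v u" using sg by (auto simp: simple_graph_def)

lemma h0: "v \<in> V \<Longrightarrow> h v = 0 \<Longrightarrow> v = \<rho>" using pE by fastforce

lemma pw: "v \<in> V \<Longrightarrow> (p^^j) v \<in> V \<and> h ((p^^j) v) = h v - j \<and> v \<in> nb E ((p^^j) v) j"
proof (induction j)
  case 0 thus ?case by (simp add: nb_center)
next
  case (Suc j)
  define w where "w = (p^^j) v"
  have wV: "w \<in> V" and hw: "h w = h v - j" and vw: "v \<in> nb E w j" using Suc by (auto simp: w_def)
  have wp: "w \<in> nb E (p w) 1"
  proof (cases "w = \<rho>")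
    case True thus ?thesis using pr by (simp add: nb_center)
  next
    case False thus ?thesis using pE[OF wV] by (auto simp: nb_one)
  qed
  hence "v \<in> nb E (p w) (Suc j)" using nb_step[OF wp] vw by blast
  moreover have "h (p w) = h w - 1" using pE[OF wV] pr hr by (cases "w = \<rho>") auto
  ultimately show ?case using pV[OF wV] hw by (simp add: w_def)
qed

lemma pw_root: "v \<in> V \<Longrightarrow> h v \<le> j \<Longrightarrow> (p^^j) v = \<rho>"
  using pw[of v j] h0 by auto

lemma anc_closed: "(\<forall>v\<in>R. p v \<in> R) \<Longrightarrow> v \<in> R \<Longrightarrow> (p^^j) v \<in> R"
  by (induction j) auto

lemma funpow_comb: "(p^^i) ((p^^j) x) = (p^^(i+j)) x"
  by (simp add: funpow_add)

lemma tree_cover: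
  "2 \<le> m \<Longrightarrow> R \<subseteq> V \<Longrightarrow> (\<forall>v\<in>R. p v \<in> R) \<Longrightarrow> 2 * card R \<le> m * (m+1) + 2 \<Longrightarrow>
   \<exists>ys. length ys = m \<and> set ys \<subseteq> V \<and> (\<forall>v\<in>R. \<exists>i<m. v \<in> nb E (ys!i) (m - Suc i))"
proof (induction m arbitrary: R rule: nat_induct_at_least)
  case base
  have finR: "finite R" using base(1) sg finite_subset by (auto simp: simple_graph_def)
  show ?case
  proof (cases "\<forall>v\<in>R. h v \<le> 1")
    case True
    have "\<forall>v\<in>R. \<exists>i<2. v \<in> nb E ([\<rho>,\<rho>]!i) (2 - Suc i)"
    proof
      fix v assume "v \<in> R"
      hence vV: "v \<in> V" using base by auto
      have "v \<in> nb E ((p^^(h v)) v) (h v)" using pw[OF vV] by simp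
      hence "v \<in> nb E \<rho> (h v)" using pw_root[OF vV] by simp
      hence "v \<in> nb E ([\<rho>,\<rho>]!0) (2 - Suc 0)" using nb_mono[of "h v" 1 E \<rho>] True \<open>v\<in>R\<close> by auto
      thus "\<exists>i<2. v \<in> nb E ([\<rho>,\<rho>]!i) (2 - Suc i)" by (intro exI[of _ 0]) auto
    qed
    thus ?thesis using rV by (intro exI[of _ "[\<rho>,\<rho>]"]) force
  next
    case False
    then obtain w where wR: "w \<in> R" and hw: "h w \<ge> 2" by auto
    have wV: "w \<in> V" using wR base by auto
    define a where "a = p w"
    define b where "b = p a"
    have wr: "w \<noteq> \<rho>" using hw hr by auto
    have aR: "a \<in> R" using base(2) wR by (auto simp: a_def)
    have aV: "a \<in> V" using aR base by auto
    have ha: "h w = Suc (h a)" and Eaw: "E a w" using pE[OF wV wr] by (auto simp: a_def)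
    have ar: "a \<noteq> \<rho>" using ha hw hr by auto
    have bR: "b \<in> R" using base(2) aR by (auto simp: b_def)
    have hb: "h a = Suc (h b)" and Eba: "E b a" using pE[OF aV ar] by (auto simp: b_def)
    have "w \<noteq> a" "w \<noteq> b" "a \<noteq> b" using ha hb by auto
    hence dist: "card {w,a,b} = 3" by simp
    have sub: "{w,a,b} \<subseteq> R" using wR aR bR by auto
    have "card (R - {w,a,b}) = card R - 3" using card_Diff_subset[OF _ sub] dist by simp
    hence c1: "card (R - {w,a,b}) \<le> 1" using base(3) by simp
    obtain z where zV: "z \<in> V" and zc: "R - {w,a,b} \<subseteq> {z}"
    proof (cases "R - {w,a,b} = {}")
      case True thus ?thesis using that rV by blast
    next
      case False
      moreover have "finite (R - {w,a,b})" using finR by simp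
      ultimately have "card (R - {w,a,b}) = 1" using c1 card_gt_0_iff[of "R - {w,a,b}"] by linarith
      then obtain z where zz: "R - {w,a,b} = {z}" by (rule card_1_singletonE)
      hence "z \<in> V" using base(1) by auto
      thus ?thesis using that zz by blast
    qed
    have "\<forall>v\<in>R. \<exists>i<2. v \<in> nb E ([a,z]!i) (2 - Suc i)"
    proof
      fix v assume vR: "v \<in> R"
      show "\<exists>i<2. v \<in> nb E ([a,z]!i) (2 - Suc i)"
      proof (cases "v \<in> {w,a,b}")
        case True
        hence "v \<in> nb E a 1" using Eaw Eba symE by (auto simp: nb_one)
        thus ?thesis by (intro exI[of _ 0]) auto
      next
        case False
        hence "v = z" using zc vR by auto
        thus ?thesis by (intro exI[of _ 1]) (auto simp: nb_center)
      qed
    qed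
    thus ?thesis using aV zV by (intro exI[of _ "[a,z]"]) auto
  qed
next
  case (Suc m)
  have finR: "finite R" using Suc.prems(1) sg finite_subset by (auto simp: simple_graph_def)
  show ?case
  proof (cases "\<forall>v\<in>R. h v \<le> m")
    case True
    define ys where "ys = replicate (Suc m) \<rho>"
    have "\<forall>v\<in>R. v \<in> nb E (ys!0) (Suc m - Suc 0)"
    proof
      fix v assume "v \<in> R"
      hence vV: "v \<in> V" using Suc.prems(1) by auto
      have "v \<in> nb E ((p^^(h v)) v) (h v)" using pw[OF vV] by simp
      hence "v \<in> nb E \<rho> (h v)" using pw_root[OF vV] by simp
      thus "v \<in> nb E (ys!0) (Suc m - Suc 0)" using nb_mono[of "h v" m E \<rho>] True \<open>v\<in>R\<close>
        by (auto simp: ys_def)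
    qed
    thus ?thesis using rV by (intro exI[of _ ys]) (auto simp: ys_def)
  next
    case False
    hence Rne: "R \<noteq> {}" by auto
    define M where "M = Max (h ` R)"
    have "M \<in> h ` R" unfolding M_def using finR Rne by simp
    then obtain w where wR: "w \<in> R" and hwM: "h w = M" by auto
    have wmax: "\<forall>v\<in>R. h v \<le> h w" using hwM finR unfolding M_def by simp
    have hw: "h w > m" using False wmax by force
    have wV: "w \<in> V" using wR Suc.prems(1) by auto
    define a where "a = (p^^m) w"
    have aV: "a \<in> V" and ha: "h a = h w - m" using pw[OF wV, of m] by (auto simp: a_def)
    define S where "S = {v\<in>R. \<exists>j. (p^^j) v = a}"
    define T where "T = (\<lambda>i. (p^^i) w) ` {0..m}"
    have injT: "inj_on (\<lambda>i. (p^^i) w) {0..m}"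
    proof (rule inj_onI)
      fix i j assume "i \<in> {0..m}" "j \<in> {0..m}" "(p^^i) w = (p^^j) w"
      hence "h w - i = h w - j" using pw[OF wV, of i] pw[OF wV, of j] by simp
      thus "i = j" using \<open>i \<in> {0..m}\<close> \<open>j \<in> {0..m}\<close> hw by auto
    qed
    have cT: "card T = Suc m" unfolding T_def using card_image[OF injT] by simp
    have TS: "T \<subseteq> S"
    proof
      fix x assume "x \<in> T"
      then obtain i where i: "i \<le> m" "x = (p^^i) w" unfolding T_def by auto
      have "x \<in> R" using anc_closed[OF Suc.prems(2) wR] i by simp
      moreover have "(p^^(m - i)) x = a" using i funpow_comb[of "m-i" i w] by (simp add: a_def)
      ultimately show "x \<in> S" unfolding S_def by auto
    qed
    have SR: "S \<subseteq> R" unfolding S_def by auto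
    have finS: "finite S" using finR SR finite_subset by auto
    have cS: "card S \<ge> Suc m" using card_mono[OF finS TS] cT by simp
    define R' where "R' = R - S"
    have cR': "card R' = card R - card S" unfolding R'_def using card_Diff_subset[OF finS SR] .
    have cSR: "card S \<le> card R" using card_mono[OF finR SR] .
    have ar: "(Suc m) * (Suc m + 1) = m * (m+1) + 2 * Suc m" by simp
    have c2: "2 * card R' \<le> m * (m+1) + 2" using Suc.prems(3) cS cSR cR' unfolding ar by (rule arith_helper)
    have R'V: "R' \<subseteq> V" using Suc.prems(1) unfolding R'_def by auto
    have R'cl: "\<forall>v\<in>R'. p v \<in> R'"
    proof
      fix v assume vR': "v \<in> R'"
      hence "p v \<in> R" using Suc.prems(2) unfolding R'_def by auto
      moreover have "p v \<notin> S"
      proof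
        assume "p v \<in> S"
        then obtain j where "(p^^j) (p v) = a" unfolding S_def by auto
        hence "(p^^(Suc j)) v = a" using funpow_comb[of j 1 v] by simp
        hence "v \<in> S" using vR' unfolding R'_def S_def by blast
        thus False using vR' unfolding R'_def by blast
      qed
      ultimately show "p v \<in> R'" unfolding R'_def by auto
    qed
    obtain ys' where ys': "length ys' = m" "set ys' \<subseteq> V"
      "\<forall>v\<in>R'. \<exists>i<m. v \<in> nb E (ys'!i) (m - Suc i)"
      using Suc.IH[OF R'V R'cl c2] by blast
    define ys where "ys = a # ys'"
    have "\<forall>v\<in>R. \<exists>i<Suc m. v \<in> nb E (ys!i) (Suc m - Suc i)"
    proof
      fix v assume vR: "v \<in> R"
      show "\<exists>i<Suc m. v \<in> nb E (ys!i) (Suc m - Suc i)"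
      proof (cases "v \<in> S")
        case True
        then obtain j where ja: "(p^^j) v = a" unfolding S_def by auto
        have vV: "v \<in> V" using vR Suc.prems(1) by auto
        have hv: "h a = h v - j" and vn: "v \<in> nb E a j" using pw[OF vV, of j] ja by auto
        have "h a \<ge> 1" using ha hw by simp
        moreover have "h v \<le> h w" using wmax vR by blast
        ultimately have "j \<le> m" using hv ha by linarith
        hence "v \<in> nb E a m" using vn nb_mono[of j m E a] by blast
        thus ?thesis by (intro exI[of _ 0]) (auto simp: ys_def)
      next
        case False
        hence "v \<in> R'" using vR unfolding R'_def by auto
        then obtain i where "i < m" "v \<in> nb E (ys'!i) (m - Suc i)" using ys'(3) by auto
        thus ?thesis by (intro exI[of _ "Suc i"]) (auto simp: ys_def)
      qed
    qed
    thus ?thesis using ys' aV by (intro exI[of _ ys]) (auto simp: ys_def)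
  qed
qed

end



lemma reach_nb:
  assumes "connected_graph V E" "r \<in> V" "v \<in> V"
  shows "\<exists>d. v \<in> nb E r d"
proof -
  have "(\<lambda>x y. x \<in> V \<and> y \<in> V \<and> E x y)\<^sup>*\<^sup>* r v" using assms unfolding connected_graph_def by auto
  thus ?thesis
  proof (induction rule: rtranclp_induct)
    case base show ?case using nb_center by fast
  next
    case (step y z)
    then obtain d where "y \<in> nb E r d" by auto
    hence "z \<in> nb E r (Suc d)" using step(2) by auto
    thus ?case by blast
  qed
qed

lemma tree_exists:
  assumes sg: "simple_graph V E" and c: "connected_graph V E" and r: "\<rho> \<in> V"
  shows "\<exists>h p. rtree V E \<rho> h p"
proof -
  define h where "h v = (LEAST d. v \<in> nb E \<rho> d)" for v
  have hin: "v \<in> nb E \<rho> (h v)" if "v \<in> V" for v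
    unfolding h_def using reach_nb[OF c r that] by (rule LeastI_ex)
  have hmin: "v \<notin> nb E \<rho> d" if "d < h v" for v d
    using not_less_Least[of d "\<lambda>d. v \<in> nb E \<rho> d"] that unfolding h_def by auto
  have hle: "h v \<le> d" if "v \<in> nb E \<rho> d" for v d
    unfolding h_def using that by (rule Least_le)
  have hr: "h \<rho> = 0" using hle[of \<rho> 0] by simp
  have par: "\<exists>u. u \<in> V \<and> E u v \<and> h v = Suc (h u)" if vV: "v \<in> V" and vr: "v \<noteq> \<rho>" for v
  proof -
    obtain d where hd: "h v = Suc d" using hin[OF vV] vr by (cases "h v") auto
    have "v \<in> nb E \<rho> (Suc d)" using hin[OF vV] hd by simp
    moreover have vn: "v \<notin> nb E \<rho> d" using hmin[of d v] hd by simp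
    ultimately obtain u where u: "u \<in> nb E \<rho> d" "E u v" by auto
    have uV: "u \<in> V" using u(2) sg by (auto simp: simple_graph_def)
    have "h u \<le> d" using hle[OF u(1)] .
    moreover have "\<not> h u < d"
    proof
      assume "h u < d"
      have "v \<in> nb E \<rho> (Suc (h u))" using u(2) hin[OF uV] by auto
      hence "v \<in> nb E \<rho> d" using nb_mono[of "Suc (h u)" d E \<rho>] \<open>h u < d\<close> by auto
      thus False using vn by simp
    qed
    ultimately have "h u = d" by simp
    thus ?thesis using u uV hd by auto
  qed
  define p where "p v = (if v \<in> V \<and> v \<noteq> \<rho> then (SOME u. u \<in> V \<and> E u v \<and> h v = Suc (h u)) else \<rho>)" for v
  have pp: "p v \<in> V \<and> E (p v) v \<and> h v = Suc (h (p v))" if "v\<in>V" "v\<noteq>\<rho>" for v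
    using someI_ex[OF par[OF that]] that unfolding p_def by auto
  have "rtree V E \<rho> h p"
    unfolding rtree_def using sg r hr pp by (auto simp: p_def)
  thus ?thesis by blast
qed

lemma bn_tree_bound:
  assumes "simple_graph V E" "connected_graph V E" "V \<noteq> {}" "2 \<le> k" "2 * card V \<le> k*(k+1) + 2"
  shows "burning_number V E \<le> k" "\<exists>xs. burning_seq V E xs"
proof -
  obtain \<rho> where "\<rho>\<in>V" using assms(3) by auto
  then obtain h p where T: "rtree V E \<rho> h p" using tree_exists[OF assms(1,2) \<open>\<rho>\<in>V\<close>] by blast
  obtain ys where "length ys = k" "set ys \<subseteq> V" "\<forall>v\<in>V. \<exists>i<k. v \<in> nb E (ys!i) (k - Suc i)"
    using rtree.tree_cover[OF T assms(4) subset_refl _ assms(5)] rtree.pV[OF T] by blast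
  then obtain xs where "burning_seq V E xs" "length xs \<le> k" using cover_bn[OF assms(1)] by blast
  thus "burning_number V E \<le> k" "\<exists>xs. burning_seq V E xs" using bn_le by auto
qed

lemma bn_empty: "V = {} \<Longrightarrow> burning_number V E = 0"
  using bn_le[of V E "[]" 0] by (auto simp: burning_seq_def)

lemma cover2:
  assumes "simple_graph V E" "x \<in> V" "V \<subseteq> nb E x 1 \<union> {y}"
  shows "burning_number V E \<le> 2"
proof -
  define y' where "y' = (if y \<in> V then y else x)"
  have y'V: "y' \<in> V" using assms(2) by (simp add: y'_def)
  have "\<forall>v\<in>V. \<exists>i<2. v \<in> nb E ([x,y']!i) (2 - Suc i)"
  proof
    fix v assume "v \<in> V"
    show "\<exists>i<2. v \<in> nb E ([x,y']!i) (2 - Suc i)"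
    proof (cases "v \<in> nb E x 1")
      case True thus ?thesis by (intro exI[of _ 0]) auto
    next
      case False
      hence "v = y'" using assms(3) \<open>v \<in> V\<close> by (auto simp: y'_def)
      thus ?thesis by (intro exI[of _ 1]) (auto simp: nb_center)
    qed
  qed
  then obtain xs where "burning_seq V E xs" "length xs \<le> 2"
    using cover_bn[OF assms(1), of "[x,y']" 2] assms(2) y'V by auto
  thus ?thesis using bn_le by blast
qed

lemma cover3:
  assumes "simple_graph V E" "x1 \<in> V" "x2 \<in> V" "V \<subseteq> nb E x1 2 \<union> nb E x2 1 \<union> {z}"
  shows "burning_number V E \<le> 3"
proof -
  define z' where "z' = (if z \<in> V then z else x1)"
  have z'V: "z' \<in> V" using assms(2) by (simp add: z'_def)
  have "\<forall>v\<in>V. \<exists>i<3. v \<in> nb E ([x1,x2,z']!i) (3 - Suc i)"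
  proof
    fix v assume "v \<in> V"
    show "\<exists>i<3. v \<in> nb E ([x1,x2,z']!i) (3 - Suc i)"
    proof (cases "v \<in> nb E x1 2")
      case True thus ?thesis by (intro exI[of _ 0]) auto
    next
      case F1: False
      show ?thesis
      proof (cases "v \<in> nb E x2 1")
        case True thus ?thesis by (intro exI[of _ 1]) auto
      next
        case False
        hence "v = z'" using F1 assms(4) \<open>v \<in> V\<close> by (auto simp: z'_def)
        thus ?thesis by (intro exI[of _ 2]) (auto simp: nb_center)
      qed
    qed
  qed
  then obtain xs where "burning_seq V E xs" "length xs \<le> 3"
    using cover_bn[OF assms(1), of "[x1,x2,z']" 3] assms(2,3) z'V by auto
  thus ?thesis using bn_le by blast
qed

lemma le2_cover:
  assumes "burning_seq V E xs0" "burning_number V E \<le> 2" "V \<noteq> {}"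
  shows "\<exists>x\<in>V. \<exists>y. V \<subseteq> nb E x 1 \<union> {y}"
proof -
  obtain xs where xs: "burning_seq V E xs" "length xs = burning_number V E"
    using bn_attained[OF assms(1)] by blast
  hence sub: "set xs \<subseteq> V" and cov: "V \<subseteq> burned V E xs (length xs)" unfolding burning_seq_def by auto
  have "length xs \<le> 2" using xs assms(2) by simp
  then consider "xs = []" | a where "xs = [a]" | a b where "xs = [a,b]"
    by (metis One_nat_def Suc_1 le_Suc_eq le_zero_eq length_0_conv length_Suc_conv)
  thus ?thesis
  proof cases
    case 1 thus ?thesis using cov assms(3) by simp
  next
    case (2 a)
    hence "V \<subseteq> {a}" using cov by simp
    thus ?thesis using sub 2 by (intro bexI[of _ a]) (auto simp: nb_center)
  next
    case (3 a b)
    hence "V \<subseteq> nb E a 1 \<union> {b}" using cov by (auto simp: nb_one)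
    thus ?thesis using sub 3 by auto
  qed
qed

lemma compl_simple: "simple_graph V E \<Longrightarrow> simple_graph V (complement V E)"
  unfolding simple_graph_def complement_def by auto

lemma compl_compl: "simple_graph V E \<Longrightarrow> complement V (complement V E) = E"
  unfolding simple_graph_def complement_def by (intro ext) auto

lemma nb1_sym: "simple_graph V E \<Longrightarrow> w \<in> nb E v 1 \<Longrightarrow> v \<in> nb E w 1"
  unfolding simple_graph_def by (auto simp: nb_one)

lemma deg_cover:
  assumes "simple_graph V X" "x \<in> V" "\<forall>w. X x w \<longrightarrow> w = y"
  shows "V \<subseteq> nb (complement V X) x 1 \<union> {y}"
  using assms by (auto simp: nb_one complement_def)

lemma nb1_card3:
  assumes sg: "simple_graph V X" and x: "x \<in> V" and d: "\<forall>y. \<not> (\<forall>w. X x w \<longrightarrow> w = y)"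
  shows "3 \<le> card (nb X x 1)"
proof -
  obtain b1 where b1: "X x b1" using d by blast
  obtain b2 where b2: "X x b2" "b2 \<noteq> b1" using d by blast
  have "x \<noteq> b1" "x \<noteq> b2" using b1 b2 sg by (auto simp: simple_graph_def)
  hence "card {x,b1,b2} = 3" using b2 by simp
  moreover have "{x,b1,b2} \<subseteq> nb X x 1" using b1 b2 by (auto simp: nb_one)
  moreover have "finite (nb X x 1)" using nb_in_V[OF sg x, of 1] sg finite_subset unfolding simple_graph_def by blast
  ultimately show ?thesis by (metis card_mono)
qed



lemma diam_compl:
  assumes sg: "simple_graph V X" and u: "u \<in> V" and v: "v \<in> V" and nv: "v \<notin> nb X u 2"
  shows "V \<subseteq> nb (complement V X) u 2"
proof
  fix w assume w: "w \<in> V"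
  have sym: "\<And>a b. X a b \<Longrightarrow> X b a" using sg by (simp add: simple_graph_def)
  have vu: "v \<noteq> u" and nuv: "\<not> X u v" and nt: "\<And>t. X u t \<Longrightarrow> \<not> X t v"
    using nv unfolding nb_two by auto
  show "w \<in> nb (complement V X) u 2"
  proof (cases "w = u")
    case True thus ?thesis by (simp add: nb_center)
  next
    case False
    show ?thesis
    proof (cases "X u w")
      case True
      have "complement V X u v" using u v vu nuv by (simp add: complement_def)
      moreover have "complement V X v w" using v w True nt[OF True] sym nuv
        by (auto simp: complement_def)
      ultimately show ?thesis unfolding nb_two by blast
    next
      case F2: False
      have "complement V X u w" using u w False F2 by (simp add: complement_def)
      thus ?thesis unfolding nb_two by blast
    qed
  qed
qed

lemma near2: "w \<in> nb X x 1 \<Longrightarrow> X w c \<Longrightarrow> c \<in> nb X x 2"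
  unfolding nb_two nb_one by auto

lemma h_one:
  assumes "finite V" "S \<subseteq> V" "card S + 1 = card V"
  shows "\<exists>r. V - S = {r}"
proof -
  have "finite S" using assms finite_subset by auto
  hence "card (V - S) = 1" using card_Diff_subset[OF _ assms(2)] assms by simp
  thus ?thesis by (meson card_1_singletonE)
qed

lemma h_out:
  assumes "finite S" "card S < card V"
  shows "\<exists>w\<in>V. w \<notin> S"
proof (rule ccontr)
  assume "\<not> ?thesis" hence "V \<subseteq> S" by auto
  hence "card V \<le> card S" using card_mono assms(1) by blast
  thus False using assms by simp
qed

lemma abc:
  assumes sg: "simple_graph V X" and u: "u \<in> V" and v: "v \<in> V" and nv: "v \<notin> nb X u 2"
    and d: "\<forall>x\<in>V. \<forall>y. \<not> (\<forall>w. X x w \<longrightarrow> w = y)" and n8: "card V \<le> 8"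
  shows "burning_number V X \<le> 3"
proof -
  have fin: "finite V" using sg by (simp add: simple_graph_def)
  have sym: "\<And>a b. X a b \<Longrightarrow> X b a" using sg by (simp add: simple_graph_def)
  have irr: "\<And>a. \<not> X a a" using sg by (simp add: simple_graph_def)
  have inV: "\<And>a b. X a b \<Longrightarrow> b \<in> V" using sg by (simp add: simple_graph_def)
  define A where "A = nb X u 1"
  define B where "B = nb X v 1"
  have AV: "A \<subseteq> V" using nb_in_V[OF sg u, of 1] unfolding A_def .
  have BV: "B \<subseteq> V" using nb_in_V[OF sg v, of 1] unfolding B_def .
  have disj: "A \<inter> B = {}"
  proof (rule ccontr)
    assume "A \<inter> B \<noteq> {}" then obtain w where w: "w \<in> A" "w \<in> B" by auto
    have "v \<in> nb X w 1" using nb1_sym[OF sg] w(2) by (simp add: B_def)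
    hence "v \<in> nb X u (Suc 1)" using nb_step[of w X u 1] w(1) by (auto simp: A_def)
    thus False using nv by (simp add: numeral_2_eq_2)
  qed
  have cA: "3 \<le> card A" using nb1_card3[OF sg u] d u by (simp add: A_def)
  have cB: "3 \<le> card B" using nb1_card3[OF sg v] d v by (simp add: B_def)
  define C where "C = V - (A \<union> B)"
  have finA: "finite A" and finB: "finite B" using AV BV fin finite_subset by auto
  have "card (A \<union> B) = card A + card B" using card_Un_disjoint[OF finA finB disj] .
  moreover have "card C = card V - card (A \<union> B)" unfolding C_def
    using card_Diff_subset[of "A \<union> B" V] finA finB AV BV by auto
  ultimately have cC: "card C \<le> 2" using cA cB n8 by linarith
  have finC: "finite C" using fin by (simp add: C_def)
  define Uu where "Uu = V - nb X u 2 - B"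
  define Uv where "Uv = V - nb X v 2 - A"
  have A2: "A \<subseteq> nb X u 2" unfolding A_def using nb_mono[of 1 2 X u] by simp
  have B2: "B \<subseteq> nb X v 2" unfolding B_def using nb_mono[of 1 2 X v] by simp
  show ?thesis
  proof (cases "\<exists>z. Uu \<subseteq> {z}")
    case True then obtain z where "Uu \<subseteq> {z}" by auto
    hence "V \<subseteq> nb X u 2 \<union> nb X v 1 \<union> {z}" unfolding Uu_def B_def by auto
    thus ?thesis using cover3[OF sg u v] by blast
  next
    case F1: False
    show ?thesis
    proof (cases "\<exists>z. Uv \<subseteq> {z}")
      case True then obtain z where "Uv \<subseteq> {z}" by auto
      hence "V \<subseteq> nb X v 2 \<union> nb X u 1 \<union> {z}" unfolding Uv_def A_def by auto
      thus ?thesis using cover3[OF sg v u] by blast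
    next
      case False
      have UuC: "Uu \<subseteq> C" unfolding Uu_def C_def using A2 by auto
      have UvC: "Uv \<subseteq> C" unfolding Uv_def C_def using B2 by auto
      obtain c1 where c1: "c1 \<in> Uu" using F1 by blast
      obtain c2 where c2: "c2 \<in> Uu" "c2 \<noteq> c1" using F1 c1 by blast
      obtain e1 where e1: "e1 \<in> Uv" using False by blast
      obtain e2 where e2: "e2 \<in> Uv" "e2 \<noteq> e1" using False e1 by blast
      have c12: "card {c1,c2} = 2" using c2 by simp
      have CC: "C = {c1,c2}"
        using card_seteq[OF finC, of "{c1,c2}"] UuC c1 c2 cC c12 by auto
      have "card {e1,e2} = 2" using e2 by simp
      hence "Uv = C" using card_seteq[OF finC UvC] card_mono[of Uv "{e1,e2}"] e1 e2 cC
        card_mono[OF _ , of "{e1,e2}" Uv] finite_subset[OF UvC finC] by auto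
      hence c1v: "c1 \<in> Uv" using CC by auto
      have c1V: "c1 \<in> V" using c1 by (simp add: Uu_def)
      have nbr: "w = c2" if "X c1 w" for w
      proof -
        have wV: "w \<in> V" using inV that .
        have "w \<notin> A"
        proof
          assume "w \<in> A"
          hence "c1 \<in> nb X u 2" using near2[of w X u c1] sym[OF that] by (simp add: A_def)
          thus False using c1 by (simp add: Uu_def)
        qed
        moreover have "w \<notin> B"
        proof
          assume "w \<in> B"
          hence "c1 \<in> nb X v 2" using near2[of w X v c1] sym[OF that] by (simp add: B_def)
          thus False using c1v by (simp add: Uv_def)
        qed
        ultimately have "w \<in> C" using wV by (simp add: C_def)
        moreover have "w \<noteq> c1" using irr that by auto
        ultimately show ?thesis using CC by auto
      qed
      obtain w1 where w1: "X c1 w1" using d c1V by blast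
      obtain w2 where w2: "X c1 w2" "w2 \<noteq> w1" using d c1V w1 by blast
      show ?thesis using nbr[OF w1] nbr[OF w2(1)] w2(2) by simp
    qed
  qed
qed

lemma deg_exact:
  assumes sg: "simple_graph V X" and c5: "card V = 5" and x: "x \<in> V"
    and d: "\<forall>y. \<not> (\<forall>w. X x w \<longrightarrow> w = y)" and nc: "\<forall>y. \<not> V \<subseteq> nb X x 1 \<union> {y}"
    and xb: "X x b"
  shows "\<exists>e. e \<noteq> b \<and> (\<forall>w. X x w \<longleftrightarrow> w = b \<or> w = e)"
proof -
  have fin: "finite V" and irr: "\<And>a. \<not> X a a" and inV: "\<And>a b. X a b \<Longrightarrow> b \<in> V"
    using sg by (auto simp: simple_graph_def)
  obtain e where e: "X x e" "e \<noteq> b" using d by blast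
  have "\<forall>w. X x w \<longrightarrow> w = b \<or> w = e"
  proof (rule ccontr)
    assume "\<not> ?thesis" then obtain c where c: "X x c" "c \<noteq> b" "c \<noteq> e" by blast
    have "x \<noteq> b" "x \<noteq> e" "x \<noteq> c" using irr xb e c by auto
    hence "card {x,b,e,c} = 4" using c e by auto
    moreover have "{x,b,e,c} \<subseteq> V" using x inV xb e c by auto
    ultimately obtain y where "V - {x,b,e,c} = {y}" using h_one[OF fin] c5 by fastforce
    hence "V \<subseteq> nb X x 1 \<union> {y}" using xb e c by (auto simp: nb_one)
    thus False using nc by blast
  qed
  thus ?thesis using e xb by blast
qed

lemma five_C5:
  assumes sg: "simple_graph V X" and c5: "card V = 5"
    and d: "\<forall>x\<in>V. \<forall>y. \<not> (\<forall>w. X x w \<longrightarrow> w = y)" and nc: "\<forall>x\<in>V. \<forall>y. \<not> V \<subseteq> nb X x 1 \<union> {y}"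
  shows "iso_C5 V X"
proof -
  have fin: "finite V" and irr: "\<And>a. \<not> X a a" and inV: "\<And>a b. X a b \<Longrightarrow> b \<in> V"
    and sym: "\<And>a b. X a b \<Longrightarrow> X b a"
    using sg by (auto simp: simple_graph_def)
  have N: "\<exists>e. e \<noteq> b \<and> (\<forall>w. X x w \<longleftrightarrow> w = b \<or> w = e)" if xb: "X x b" for x b
  proof -
    have xV: "x \<in> V" using inV sym xb by blast
    have "\<forall>y. \<not> (\<forall>w. X x w \<longrightarrow> w = y)" "\<forall>y. \<not> V \<subseteq> nb X x 1 \<union> {y}" using d nc xV by auto
    thus ?thesis using deg_exact[OF sg c5 xV _ _ xb] by blast
  qed
  obtain a where a: "a \<in> V" using c5 by (metis card.empty ex_in_conv zero_neq_numeral)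
  obtain b where ab: "X a b" using d a by blast
  then obtain e where eb: "e \<noteq> b" and Na: "\<forall>w. X a w \<longleftrightarrow> w = b \<or> w = e" using N by blast
  have ae: "X a e" using Na by simp
  obtain c where ca: "c \<noteq> a" and Nb: "\<forall>w. X b w \<longleftrightarrow> w = a \<or> w = c" using N[OF sym[OF ab]] by blast
  obtain dd where da: "dd \<noteq> a" and Ne: "\<forall>w. X e w \<longleftrightarrow> w = a \<or> w = dd" using N[OF sym[OF ae]] by blast
  have bV: "b \<in> V" and eV: "e \<in> V" and cV: "c \<in> V" and dV: "dd \<in> V"
    using inV ab ae Nb Ne by blast+
  have abn: "a \<noteq> b" "a \<noteq> e" using irr ab ae by auto
  have cb: "c \<noteq> b" using irr Nb by blast
  have ce: "c \<noteq> e"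
  proof
    assume ce: "c = e"
    have "X e b" using sym Nb ce by blast
    hence Ne': "\<forall>w. X e w \<longleftrightarrow> w = a \<or> w = b" using Ne abn by auto
    have "card {a,b,e} = 3" using abn eb by auto
    then obtain w where w: "w \<in> V" "w \<notin> {a,b,e}" using h_out[of "{a,b,e}" V] c5 by auto
    obtain q where q: "X w q" using d w(1) by blast
    obtain q2 where q2: "X w q2" "q2 \<noteq> q" using d w(1) q by blast
    have "card {a,b,e,w} = 4" using abn eb w(2) by auto
    moreover have "{a,b,e,w} \<subseteq> V" using a bV eV w by auto
    ultimately obtain r where r: "V - {a,b,e,w} = {r}" using h_one[OF fin] c5 by fastforce
    have qin: "t \<in> V - {a,b,e,w}" if tw: "X w t" for t
    proof -
      have "X t w" using sym tw .
      thus ?thesis using tw inV[OF tw] irr[of w] Na Nb Ne' w(2) ce by auto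
    qed
    have "q \<in> V - {a,b,e,w}" "q2 \<in> V - {a,b,e,w}" using qin q q2(1) by auto
    thus False using r q2(2) by auto
  qed
  have dc: "dd \<noteq> c"
  proof
    assume dc: "dd = c"
    have abce: "card {a,b,c,e} = 4" using abn eb ca ce cb by auto
    then obtain w where w: "w \<in> V" "w \<notin> {a,b,c,e}" using h_out[of "{a,b,c,e}" V] c5 by auto
    have "{a,b,c,e,w} \<subseteq> V" using a bV cV eV w by auto
    moreover have "card {a,b,c,e,w} = 5" using abn eb ca ce cb w(2) by auto
    ultimately have VV: "V = {a,b,c,e,w}" using card_seteq[OF fin] c5 by (metis order_refl)
    obtain q where q: "X w q" using d w(1) by blast
    have "X c b" "X c e" using sym Nb Ne dc by blast+
    then obtain r where Nc: "\<forall>t. X c t \<longleftrightarrow> t = b \<or> t = r" "r \<noteq> b" using N by blast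
    have "q \<in> V" using inV q by blast
    hence qin: "q \<in> {a,b,c,e,w}" using VV by simp
    have Xqw: "X q w" using sym q .
    have "r = e" using Nc \<open>X c e\<close> eb by auto
    thus False using qin Xqw q irr[of w] Na Nb Ne Nc w(2) dc by auto
  qed
  have db: "dd \<noteq> b"
  proof
    assume "dd = b"
    hence "X b e" using Ne sym by auto
    thus False using Nb abn ce by auto
  qed
  have de: "dd \<noteq> e" using irr Ne by blast
  have dist5: "card {a,b,c,dd,e} = 5" using abn eb ca ce dc db de da cb by auto
  have VV: "V = {a,b,c,dd,e}"
    using card_seteq[OF fin, of "{a,b,c,dd,e}"] dist5 c5 a bV cV dV eV by auto
  have "X b c" using Nb by simp
  then obtain r where Nc: "\<forall>t. X c t \<longleftrightarrow> t = b \<or> t = r" "r \<noteq> b" using N[OF sym] by blast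
  have Xcr: "X c r" using Nc by simp
  hence "r \<in> {a,b,c,dd,e}" using inV VV by blast
  moreover have "X r c" using sym Xcr .
  ultimately have rd: "r = dd" using Nc(2) irr[of c] Na Ne ca ce cb dc by auto
  have "X e dd" using Ne by simp
  then obtain r' where Nd: "\<forall>t. X dd t \<longleftrightarrow> t = e \<or> t = r'" "r' \<noteq> e" using N[OF sym] by blast
  have "X dd c" using sym Xcr rd by blast
  hence rc: "r' = c" using Nd ce by auto
  define f where "f x = (if x = a then 0 else if x = b then 1 else if x = c then 2 else if x = dd then (3::nat) else 4)" for x
  have fv: "f a = 0" "f b = 1" "f c = 2" "f dd = 3" "f e = 4"
    using abn eb ca ce dc db de da cb by (auto simp: f_def)
  have "bij_betw f V {0..<5}"
  proof -
    have "inj_on f V" unfolding VV inj_on_def using fv by auto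
    moreover have "f ` V = {0..<5}" unfolding VV using fv by auto
    ultimately show ?thesis by (simp add: bij_betw_def)
  qed
  moreover have "\<forall>u\<in>V. \<forall>v\<in>V. X u v \<longleftrightarrow> ((f u + 1) mod 5 = f v \<or> (f v + 1) mod 5 = f u)"
    unfolding VV using fv Na Nb Nc Nd Ne rd rc irr abn eb ca ce dc db de da cb by auto
  ultimately show ?thesis unfolding iso_C5_def by blast
qed



lemma A_k: "1 \<le> (n::nat) \<Longrightarrow> \<exists>k\<ge>2. 2*n \<le> k*(k+1)+2 \<and> (k = 2 \<or> k*(k-1)+2 < 2*n)"
proof -
  assume n: "1 \<le> n"
  define P where "P k = (2 \<le> k \<and> 2*n \<le> k*(k+1)+2)" for k
  have ex: "P (n+2)" unfolding P_def by (simp add: algebra_simps)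
  define k where "k = (LEAST k. P k)"
  have Pk: "P k" unfolding k_def using ex by (rule LeastI)
  have "k = 2 \<or> k*(k-1)+2 < 2*n"
  proof (rule ccontr)
    assume "\<not> ?thesis"
    hence "k \<noteq> 2" "2*n \<le> k*(k-1)+2" by auto
    hence "P (k-1)" using Pk unfolding P_def by (cases k) (auto simp: algebra_simps)
    hence "k \<le> k - 1" unfolding k_def by (rule Least_le)
    moreover have "2 \<le> k" using Pk unfolding P_def by simp
    ultimately show False by arith
  qed
  thus ?thesis using Pk unfolding P_def by blast
qed

lemma A1: "2 \<le> k \<Longrightarrow> 1 \<le> (n::nat) \<Longrightarrow> (k = 2 \<or> k*(k-1)+2 < 2*n) \<Longrightarrow> 2*k < n+4"
proof -
  assume a: "2 \<le> k" "1 \<le> n" "k = 2 \<or> k*(k-1)+2 < 2*n"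
  show ?thesis
  proof (cases "k \<le> 4")
    case True
    hence "k = 2 \<or> k = 3 \<or> k = 4" using a(1) by auto
    thus ?thesis using a by auto
  next
    case False
    hence "4*k \<le> (k-1)*k" by (intro mult_le_mono1) simp
    hence "4*k \<le> k*(k-1)" by (simp add: mult.commute)
    thus ?thesis using a False by linarith
  qed
qed

lemma A2: "6 \<le> (n::nat) \<Longrightarrow> n \<noteq> 8 \<Longrightarrow> 2 \<le> k \<Longrightarrow> (k = 2 \<or> k*(k-1)+2 < 2*n) \<Longrightarrow> 3*k < n+4"
proof -
  assume a: "6 \<le> n" "n \<noteq> 8" "2 \<le> k" "k = 2 \<or> k*(k-1)+2 < 2*n"
  show ?thesis
  proof (cases "k \<le> 4")
    case True
    hence "k = 2 \<or> k = 3 \<or> k = 4" using a(3) by auto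
    thus ?thesis using a by auto
  next
    case False
    define j where "j = k - 5"
    have j: "k = j + 5" using False unfolding j_def by simp
    have "k*(k-1) = j*j + 9*j + 20" unfolding j by (simp add: algebra_simps)
    hence "j*j + 9*j + 22 < 2*n" using a False by auto
    hence "6*j + 23 \<le> 2*n" by linarith
    hence "3*j + 12 \<le> n" by arith
    thus ?thesis unfolding j by arith
  qed
qed

lemma five_cases: "(b::nat) < 5 \<Longrightarrow> b = 0 \<or> b = 1 \<or> b = 2 \<or> b = 3 \<or> b = 4" by auto
lemma mod5a: "(a::nat) < 5 \<Longrightarrow> b < 5 \<Longrightarrow> (b + 1) mod 5 = a \<longrightarrow> b = (a + 4) mod 5"
proof -
  assume h: "a < 5" "b < 5"
  from five_cases[OF h(1)] five_cases[OF h(2)] show ?thesis by (elim disjE) simp_all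
qed
lemma mod5b: "(a::nat) < 5 \<Longrightarrow> b < 5 \<Longrightarrow> b \<noteq> a \<longrightarrow> (a+1) mod 5 \<noteq> b \<longrightarrow> (b+1) mod 5 \<noteq> a \<longrightarrow> b = (a+2) mod 5 \<or> b = (a+3) mod 5"
proof -
  assume h: "a < 5" "b < 5"
  from five_cases[OF h(1)] five_cases[OF h(2)] show ?thesis by (elim disjE) simp_all
qed

lemma card3: "card {p,q,r::nat} \<le> 3"
  by (simp add: card_insert_if)

lemma iso_card3:
  assumes sg: "simple_graph V E" and iso: "iso_C5 V E" and x: "x \<in> V"
  shows "card (nb E x 1) \<le> 3" "card (nb (complement V E) x 1) \<le> 3"
proof -
  obtain f :: "_ \<Rightarrow> nat" where bij: "bij_betw f V {0..<5}" and ed: "\<forall>u\<in>V. \<forall>v\<in>V. E u v \<longleftrightarrow> ((f u + 1) mod 5 = f v \<or> (f v + 1) mod 5 = f u)"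
    using iso unfolding iso_C5_def by blast
  have inj: "inj_on f V" using bij by (simp add: bij_betw_def)
  have f5: "\<And>v. v \<in> V \<Longrightarrow> f v < 5" using bij by (auto simp: bij_betw_def)
  have inV: "\<And>a b. E a b \<Longrightarrow> b \<in> V" using sg by (simp add: simple_graph_def)
  have s1: "nb E x 1 \<subseteq> V" using nb_in_V[OF sg x] .
  have s2: "nb (complement V E) x 1 \<subseteq> V" using nb_in_V[OF compl_simple[OF sg] x] .
  have "f ` nb E x 1 \<subseteq> {f x, (f x + 1) mod 5, (f x + 4) mod 5}"
  proof
    fix t assume "t \<in> f ` nb E x 1"
    then obtain v where v: "v \<in> nb E x 1" "t = f v" by auto
    show "t \<in> {f x, (f x + 1) mod 5, (f x + 4) mod 5}"
    proof (cases "v = x")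
      case True thus ?thesis using v by simp
    next
      case False
      hence "E x v" using v by (simp add: nb_one)
      hence vV: "v \<in> V" using inV by blast
      have dj: "(f x + 1) mod 5 = f v \<or> (f v + 1) mod 5 = f x" using ed x vV \<open>E x v\<close> by blast
      have "f v = (f x + 1) mod 5 \<or> f v = (f x + 4) mod 5"
      proof (cases "(f x + 1) mod 5 = f v")
        case True thus ?thesis by simp
      next
        case False
        hence "(f v + 1) mod 5 = f x" using dj by blast
        thus ?thesis using mod5a[of "f x" "f v"] f5[OF x] f5[OF vV] by blast
      qed
      thus ?thesis using v(2) by blast
    qed
  qed
  hence "card (f ` nb E x 1) \<le> card {f x, (f x + 1) mod 5, (f x + 4) mod 5}" by (intro card_mono) simp_all
  hence "card (f ` nb E x 1) \<le> 3" using card3 le_trans by blast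
  moreover have "card (f ` nb E x 1) = card (nb E x 1)" using card_image inj_on_subset[OF inj s1] by blast
  ultimately show "card (nb E x 1) \<le> 3" by simp
  have "f ` nb (complement V E) x 1 \<subseteq> {f x, (f x + 2) mod 5, (f x + 3) mod 5}"
  proof
    fix t assume "t \<in> f ` nb (complement V E) x 1"
    then obtain v where v: "v \<in> nb (complement V E) x 1" "t = f v" by auto
    show "t \<in> {f x, (f x + 2) mod 5, (f x + 3) mod 5}"
    proof (cases "v = x")
      case True thus ?thesis using v by simp
    next
      case False
      hence "complement V E x v" using v by (simp add: nb_one)
      hence vV: "v \<in> V" and "v \<noteq> x" and "\<not> E x v" by (auto simp: complement_def)
      hence n1: "(f x + 1) mod 5 \<noteq> f v" and n2: "(f v + 1) mod 5 \<noteq> f x" using ed x vV by blast+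
      moreover have "f v \<noteq> f x" using inj vV x \<open>v \<noteq> x\<close> by (auto simp: inj_on_def)
      ultimately have "f v = (f x + 2) mod 5 \<or> f v = (f x + 3) mod 5"
        using mod5b[of "f x" "f v"] f5[OF x] f5[OF vV] by blast
      thus ?thesis using v(2) by blast
    qed
  qed
  hence "card (f ` nb (complement V E) x 1) \<le> card {f x, (f x + 2) mod 5, (f x + 3) mod 5}" by (intro card_mono) simp_all
  hence "card (f ` nb (complement V E) x 1) \<le> 3" using card3 le_trans by blast
  moreover have "card (f ` nb (complement V E) x 1) = card (nb (complement V E) x 1)"
    using card_image inj_on_subset[OF inj s2] by blast
  ultimately show "card (nb (complement V E) x 1) \<le> 3" by simp
qed

lemma lower3:
  assumes sg: "simple_graph V X" and c5: "card V = 5" and ex: "\<exists>xs. burning_seq V X xs"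
    and c3: "\<forall>x\<in>V. card (nb X x 1) \<le> 3"
  shows "3 \<le> burning_number V X"
proof (rule ccontr)
  assume "\<not> ?thesis"
  hence "burning_number V X \<le> 2" by simp
  moreover have "V \<noteq> {}" using c5 by auto
  moreover obtain xs where "burning_seq V X xs" using ex by blast
  ultimately have "\<exists>x\<in>V. \<exists>y. V \<subseteq> nb X x 1 \<union> {y}" using le2_cover[of V X xs] by blast
  then obtain x y where x: "x \<in> V" and cov0: "V \<subseteq> nb X x 1 \<union> {y}" by blast
  have cov: "V \<subseteq> insert y (nb X x 1)" using cov0 by auto
  have "finite V" using sg by (simp add: simple_graph_def)
  hence fin: "finite (nb X x 1)" using finite_subset[OF nb_in_V[OF sg x, of 1]] by blast
  have "card V \<le> card (insert y (nb X x 1))" using card_mono[OF _ cov] fin by simp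
  also have "\<dots> \<le> Suc (card (nb X x 1))" using fin by (simp only: card_insert_if) simp
  finally have "5 \<le> Suc (card (nb X x 1))" using c5 by simp
  moreover have "card (nb X x 1) \<le> 3" using c3 x by blast
  ultimately show False by linarith
qed

lemma partA:
  assumes sg: "simple_graph V E" and cG: "connected_graph V E" and cH: "connected_graph V (complement V E)"
    and iso: "iso_C5 V E"
  shows "burning_number V E * burning_number V (complement V E) = card V + 4"
proof -
  obtain f where bij: "bij_betw f V {0..<(5::nat)}" using iso unfolding iso_C5_def by blast
  have c5: "card V = 5" using bij_betw_same_card[OF bij] by simp
  have ne: "V \<noteq> {}" using c5 by auto
  have sgH: "simple_graph V (complement V E)" using compl_simple[OF sg] .
  have two3: "(2::nat) \<le> 3" by simp
  have k3: "2 * card V \<le> 3*(3+1)+2" using c5 by simp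
  note u1 = bn_tree_bound[OF sg cG ne two3 k3]
  note u2 = bn_tree_bound[OF sgH cH ne two3 k3]
  have "\<forall>x\<in>V. card (nb E x 1) \<le> 3" using iso_card3(1)[OF sg iso] by blast
  hence l1: "3 \<le> burning_number V E" using lower3[OF sg c5 u1(2)] by blast
  have "\<forall>x\<in>V. card (nb (complement V E) x 1) \<le> 3" using iso_card3(2)[OF sg iso] by blast
  hence l2: "3 \<le> burning_number V (complement V E)" using lower3[OF sgH c5 u2(2)] by blast
  have "burning_number V E = 3" using l1 u1(1) by linarith
  moreover have "burning_number V (complement V E) = 3" using l2 u2(1) by linarith
  ultimately show ?thesis using c5 by simp
qed



lemma partB:
  assumes sg: "simple_graph V E" and cG: "connected_graph V E"
    and cH0: "connected_graph V (complement V E)" and ni: "\<not> iso_C5 V E"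
  shows "burning_number V E * burning_number V (complement V E) < card V + 4"
proof (cases "V = {}")
  case True thus ?thesis using bn_empty[of V] by simp
next
  case ne: False
  define H where "H = complement V E"
  have cH: "connected_graph V H" using cH0 by (simp add: H_def)
  have fin: "finite V" using sg by (simp add: simple_graph_def)
  have n1: "1 \<le> card V" using fin ne by (simp add: Suc_le_eq card_gt_0_iff)
  obtain k where k: "2 \<le> k" "2*card V \<le> k*(k+1)+2" "k = 2 \<or> k*(k-1)+2 < 2*card V"
    using A_k[OF n1] by blast
  have sgH: "simple_graph V H" using compl_simple[OF sg] by (simp add: H_def)
  have HH: "complement V H = E" using compl_compl[OF sg] by (simp add: H_def)
  note tG = bn_tree_bound[OF sg cG ne k(1,2)]
  note tH = bn_tree_bound[OF sgH cH ne k(1,2)]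
  have k2: "2*k < card V + 4" using A1[OF k(1) n1 k(3)] .
  show ?thesis
  proof (cases "burning_number V E \<le> 2")
    case True
    have "burning_number V E * burning_number V H \<le> 2 * k" using mult_le_mono[OF True tH(1)] .
    thus ?thesis using k2 by (simp add: H_def)
  next
    case G3: False
    show ?thesis
    proof (cases "burning_number V H \<le> 2")
      case True
      have "burning_number V E * burning_number V H \<le> k * 2" using mult_le_mono[OF tG(1) True] .
      thus ?thesis using k2 by (simp add: H_def)
    next
      case H3: False
      have dG: "\<forall>x\<in>V. \<forall>y. \<not> V \<subseteq> nb E x 1 \<union> {y}" using cover2[OF sg] G3 by blast
      have dH: "\<forall>x\<in>V. \<forall>y. \<not> V \<subseteq> nb H x 1 \<union> {y}" using cover2[OF sgH] H3 by blast
      have degG: "\<forall>x\<in>V. \<forall>y. \<not> (\<forall>w. E x w \<longrightarrow> w = y)"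
        using deg_cover[OF sg] dH unfolding H_def by blast
      have degH: "\<forall>x\<in>V. \<forall>y. \<not> (\<forall>w. H x w \<longrightarrow> w = y)"
        using deg_cover[OF sgH] dG unfolding HH by blast
      have n5: "card V \<noteq> 5" using five_C5[OF sg _ degG dG] ni by blast
      have k3: "k \<noteq> 2" using G3 tG(1) by auto
      hence "3 \<le> k" using k(1) by simp
      hence "3 * 2 \<le> k * (k-1)" by (intro mult_le_mono) auto
      hence "8 < 2 * card V" using k(3) k3 by linarith
      hence n6: "6 \<le> card V" using n5 by linarith
      show ?thesis
      proof (cases "\<exists>u\<in>V. \<exists>v\<in>V. v \<notin> nb E u 2")
        case True
        then obtain u v where u: "u \<in> V" and v: "v \<in> V" and nv: "v \<notin> nb E u 2" by blast
        have "V \<subseteq> nb H u 2" using diam_compl[OF sg u v nv] by (simp add: H_def)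
        hence bH3: "burning_number V H \<le> 3" using cover3[OF sgH u u, of u] by blast
        show ?thesis
        proof (cases "card V = 8")
          case True
          have "burning_number V E \<le> 3" using abc[OF sg u v nv degG] True by simp
          hence "burning_number V E * burning_number V H \<le> 3 * 3" using mult_le_mono bH3 by blast
          thus ?thesis using True by (simp add: H_def)
        next
          case False
          have "burning_number V E * burning_number V H \<le> k * 3" using mult_le_mono[OF tG(1) bH3] .
          moreover have "3*k < card V + 4" using A2[OF n6 False k(1) k(3)] .
          ultimately show ?thesis by (simp add: H_def)
        qed
      next
        case F: False
        show ?thesis
        proof (cases "\<exists>u\<in>V. \<exists>v\<in>V. v \<notin> nb H u 2")
          case True
          then obtain u v where u: "u \<in> V" and v: "v \<in> V" and nv: "v \<notin> nb H u 2" by blast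
          have "V \<subseteq> nb E u 2" using diam_compl[OF sgH u v nv] by (simp add: HH)
          hence bG3: "burning_number V E \<le> 3" using cover3[OF sg u u, of u] by blast
          show ?thesis
          proof (cases "card V = 8")
            case True
            have "burning_number V H \<le> 3" using abc[OF sgH u v nv degH] True by simp
            hence "burning_number V E * burning_number V H \<le> 3 * 3" using mult_le_mono bG3 by blast
            thus ?thesis using True by (simp add: H_def)
          next
            case False
            have "burning_number V E * burning_number V H \<le> 3 * k" using mult_le_mono[OF bG3 tH(1)] .
            moreover have "3*k < card V + 4" using A2[OF n6 False k(1) k(3)] .
            ultimately show ?thesis by (simp add: H_def)
          qed
        next
          case False
          obtain u where u: "u \<in> V" using ne by blast
          have "V \<subseteq> nb E u 2" using F u by blast
          hence bG3: "burning_number V E \<le> 3" using cover3[OF sg u u, of u] by blast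
          have "V \<subseteq> nb H u 2" using False u by blast
          hence bH3: "burning_number V H \<le> 3" using cover3[OF sgH u u, of u] by blast
          have "burning_number V E * burning_number V H \<le> 3 * 3" using mult_le_mono[OF bG3 bH3] .
          thus ?thesis using n6 by (simp add: H_def)
        qed
      qed
    qed
  qed
qed

theorem theorem2:
  fixes V :: "'a set" and E :: "'a \<Rightarrow> 'a \<Rightarrow> bool"
  assumes "simple_graph V E"
    and "connected_graph V E"
    and "connected_graph V (complement V E)"
  shows "burning_number V E * burning_number V (complement V E) \<le> card V + 4
       \<and> (burning_number V E * burning_number V (complement V E) = card V + 4 \<longleftrightarrow> iso_C5 V E)"
proof (cases "iso_C5 V E")
  case True
  thus ?thesis using partA[OF assms True] by simp
next
  case False
  thus ?thesis using partB[OF assms False] by simp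
qed


end
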